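(* Let $(\Gamma,m)$ be a smooth closed Riemannian manifold and $\mathcal{M}\subset\mathbb{R}^{n+1}$ an orientable smooth closed hypersurface. Let $\mathcal{N}_T$ be a tubular neighbourhood of $\mathcal{M}$ of fixed width such that each $x\in\mathcal{N}_T$ has a unique decomposition $x=a(x)+d(x)Dd(x)$ with $a(x)\in\mathcal{M}$, $d$ being the signed distance function to $\mathcal{M}$, and let $G(x)=\mathrm{Id}-2d(x)D^2d(x)+2d(x)^2D^2d(x)D^2d(x)$ on $\mathcal{N}_T$. Let $f:\Gamma\to\mathcal{N}_T$ be differentiable. Then $$m(\mathrm{grad}_mf^\alpha,\mathrm{grad}_mf^\beta)\,(\nabla^G_\alpha\nabla^G_\beta d)\circ f=m(\mathrm{grad}_mf^\alpha,\mathrm{grad}_mf^\beta)\,d\circ f\,\big(D_\alpha D_\rho d\,D_\beta D_\rho d\big)\circ f.$$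
   Context: Summation over repeated Greek indices $1,\dots,n+1$ (Euclidean coordinates). $d$ is the signed distance ($\operatorname{dist}(x,\mathcal{M})$ outside the bounded region enclosed by $\mathcal{M}$, minus the distance inside), smooth on $\mathcal{N}_T$ with $|Dd|=1$. $D_\alpha$ are Euclidean partial derivatives. $\nabla^G_\alpha\nabla^G_\beta d=D_\alpha D_\beta d-\Gamma(G)^\gamma_{\alpha\beta}D_\gamma d$ is the Hessian of $d$ w.r.t. $G$, with $\Gamma(G)$ the Christoffel symbols of $G$. *)

theory Defs
  imports "HOL-Analysis.Analysis"
begin

definition pd :: "(real^'m \<Rightarrow> real) \<Rightarrow> 'm \<Rightarrow> real^'m \<Rightarrow> real" where
  "pd h i x = frechet_derivative h (at x) (axis i 1)"

definition grad :: "(real^'m \<Rightarrow> real) \<Rightarrow> real^'m \<Rightarrow> real^'m" where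
  "grad h x = (\<chi> i. pd h i x)"

definition hess :: "(real^'m \<Rightarrow> real) \<Rightarrow> real^'m \<Rightarrow> real^'m^'m" where
  "hess h x = (\<chi> a b. pd (pd h b) a x)"

fun Ck_on :: "nat \<Rightarrow> (real^'m) set \<Rightarrow> (real^'m \<Rightarrow> real) \<Rightarrow> bool" where
  "Ck_on 0 U h = continuous_on U h"
| "Ck_on (Suc k) U h = (h differentiable_on U \<and> (\<forall>i. Ck_on k U (pd h i)))"

definition smooth_on :: "(real^'m) set \<Rightarrow> (real^'m \<Rightarrow> real) \<Rightarrow> bool" where
  "smooth_on U h \<longleftrightarrow> (\<forall>k. Ck_on k U h)"

definition local_defining_fun :: "(real^'m) set \<Rightarrow> real^'m \<Rightarrow> (real^'m) set \<Rightarrow> (real^'m \<Rightarrow> real) \<Rightarrow> bool" where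
  "local_defining_fun M p U \<phi> \<longleftrightarrow> open U \<and> p \<in> U \<and> smooth_on U \<phi> \<and>
     (\<forall>x\<in>U. grad \<phi> x \<noteq> 0) \<and> M \<inter> U = {x\<in>U. \<phi> x = 0}"

definition smooth_closed_hypersurface :: "(real^'m) set \<Rightarrow> bool" where
  "smooth_closed_hypersurface M \<longleftrightarrow> M \<noteq> {} \<and> compact M \<and>
     (\<forall>p\<in>M. \<exists>U \<phi>. local_defining_fun M p U \<phi>)"

definition orientable_hypersurface :: "(real^'m) set \<Rightarrow> bool" where
  "orientable_hypersurface M \<longleftrightarrow> (\<exists>\<nu>. continuous_on M \<nu> \<and>
     (\<forall>p\<in>M. norm (\<nu> p) = 1 \<and>
        (\<forall>U \<phi>. local_defining_fun M p U \<phi> \<longrightarrow> (\<exists>c. \<nu> p = c *\<^sub>R grad \<phi> p))))"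

definition sdist :: "(real^'m) set \<Rightarrow> real^'m \<Rightarrow> real" where
  "sdist M x = (if x \<in> inside M then - infdist x M else infdist x M)"

definition Gmet :: "(real^'m \<Rightarrow> real) \<Rightarrow> real^'m \<Rightarrow> real^'m^'m" where
  "Gmet d x = mat 1 - (2 * d x) *\<^sub>R hess d x + (2 * (d x)^2) *\<^sub>R (hess d x ** hess d x)"

definition christoffel :: "(real^'m \<Rightarrow> real^'m^'m) \<Rightarrow> real^'m \<Rightarrow> 'm \<Rightarrow> 'm \<Rightarrow> 'm \<Rightarrow> real" where
  "christoffel G x c a b = (1/2) * (\<Sum>e\<in>UNIV. matrix_inv (G x) $ c $ e *
      (pd (\<lambda>y. G y $ b $ e) a x + pd (\<lambda>y. G y $ a $ e) b x - pd (\<lambda>y. G y $ a $ b) e x))"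

definition hessG :: "(real^'m \<Rightarrow> real^'m^'m) \<Rightarrow> (real^'m \<Rightarrow> real) \<Rightarrow> real^'m \<Rightarrow> 'm \<Rightarrow> 'm \<Rightarrow> real" where
  "hessG G h x a b = pd (pd h b) a x - (\<Sum>c\<in>UNIV. christoffel G x c a b * pd h c x)"

end

theory Submission
  imports Defs
begin


lemma pd_at: "(h has_derivative h') (at x) \<Longrightarrow> pd h i x = h' (axis i 1)"
  by (metis pd_def frechet_derivative_at)

lemma pd_add: "f differentiable at x \<Longrightarrow> g differentiable at x \<Longrightarrow>
   pd (\<lambda>y. f y + g y) i x = pd f i x + pd g i x"
  unfolding pd_def
  by (rule pd_at[unfolded pd_def], intro has_derivative_add frechet_derivative_works[THEN iffD1])

lemma pd_diff: "f differentiable at x \<Longrightarrow> g differentiable at x \<Longrightarrow>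
   pd (\<lambda>y. f y - g y) i x = pd f i x - pd g i x"
  unfolding pd_def
  by (rule pd_at[unfolded pd_def], intro has_derivative_diff frechet_derivative_works[THEN iffD1])

lemma pd_mult: "f differentiable at x \<Longrightarrow> g differentiable at x \<Longrightarrow>
   pd (\<lambda>y. (f y::real) * g y) i x = pd f i x * g x + f x * pd g i x"
proof -
  assume a: "f differentiable at x" "g differentiable at x"
  have "((\<lambda>y. f y * g y) has_derivative (\<lambda>v. f x * frechet_derivative g (at x) v + frechet_derivative f (at x) v * g x)) (at x)"
    by (intro has_derivative_mult frechet_derivative_works[THEN iffD1] a)
  from pd_at[OF this] show ?thesis by (simp add: pd_def)
qed

lemma pd_const: "pd (\<lambda>y. c) i x = 0"
  using pd_at[of "\<lambda>y. c" "\<lambda>v. 0" x i] by simp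

lemma pd_sum: "finite S \<Longrightarrow> (\<And>j. j\<in>S \<Longrightarrow> f j differentiable at x) \<Longrightarrow>
   pd (\<lambda>y. \<Sum>j\<in>S. f j y) i x = (\<Sum>j\<in>S. pd (f j) i x)"
proof -
  assume a: "finite S" "\<And>j. j\<in>S \<Longrightarrow> f j differentiable at x"
  have "((\<lambda>y. \<Sum>j\<in>S. f j y) has_derivative (\<lambda>v. \<Sum>j\<in>S. frechet_derivative (f j) (at x) v)) (at x)"
    by (intro has_derivative_sum frechet_derivative_works[THEN iffD1] a)
  from pd_at[OF this] show ?thesis by (simp add: pd_def)
qed

lemma pd_cong: assumes "open N" "x \<in> N" "\<And>y. y \<in> N \<Longrightarrow> f y = g y"
  shows "pd f i x = pd g i x"
proof -
  have "\<And>D. (f has_derivative D) (at x) \<longleftrightarrow> (g has_derivative D) (at x)"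
    using has_derivative_transform_within_open assms by (metis (no_types, lifting))
  then show ?thesis unfolding pd_def frechet_derivative_def by simp
qed

lemma smooth_pd: "smooth_on N h \<Longrightarrow> smooth_on N (pd h i)"
  unfolding smooth_on_def by (metis Ck_on.simps(2))

lemma smooth_diff: "open N \<Longrightarrow> smooth_on N h \<Longrightarrow> y \<in> N \<Longrightarrow> h differentiable at y"
  unfolding smooth_on_def
  by (metis Ck_on.simps(2) differentiable_on_eq_differentiable_at)

lemma smooth_cont: "smooth_on N h \<Longrightarrow> continuous_on N h"
  unfolding smooth_on_def by (metis Ck_on.simps(1))

lemma line_deriv:
  fixes h :: "real^'m \<Rightarrow> real"
  assumes "h differentiable at (p + s *\<^sub>R u)"
  shows "((\<lambda>s. h (p + s *\<^sub>R u)) has_real_derivative frechet_derivative h (at (p + s *\<^sub>R u)) u) (at s)"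
proof -
  have l: "((\<lambda>s. p + s *\<^sub>R u) has_derivative (\<lambda>r. r *\<^sub>R u)) (at s)"
    by (auto intro!: derivative_eq_intros)
  have "((\<lambda>s. h (p + s *\<^sub>R u)) has_derivative (\<lambda>r. frechet_derivative h (at (p + s *\<^sub>R u)) (r *\<^sub>R u))) (at s)"
    using diff_chain_at[OF l frechet_derivative_works[THEN iffD1, OF assms]] by (simp add: o_def)
  moreover have "linear (frechet_derivative h (at (p + s *\<^sub>R u)))"
    using assms frechet_derivative_works has_derivative_linear by blast
  moreover have "(\<lambda>r. r * frechet_derivative h (at (p + s *\<^sub>R u)) u) = (*) (frechet_derivative h (at (p + s *\<^sub>R u)) u)"
    by (auto simp: fun_eq_iff mult.commute)
  ultimately show ?thesis
    unfolding has_field_derivative_def by (simp add: linear_scale)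
qed



lemma sw_aux:
  fixes h :: "real^'m \<Rightarrow> real"
  assumes N: "open N" and hs: "smooth_on N h" and t: "t > 0"
  and inN: "\<And>s \<sigma>. 0 \<le> s \<Longrightarrow> s \<le> t \<Longrightarrow> 0 \<le> \<sigma> \<Longrightarrow> \<sigma> \<le> t \<Longrightarrow> x + s *\<^sub>R axis i 1 + \<sigma> *\<^sub>R axis j 1 \<in> N"
  shows "\<exists>s \<sigma>. 0 \<le> s \<and> s \<le> t \<and> 0 \<le> \<sigma> \<and> \<sigma> \<le> t \<and>
     h (x + t *\<^sub>R axis i 1 + t *\<^sub>R axis j 1) - h (x + t *\<^sub>R axis i 1) - h (x + t *\<^sub>R axis j 1) + h x
     = t * t * pd (pd h i) j (x + s *\<^sub>R axis i 1 + \<sigma> *\<^sub>R axis j 1)"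
proof -
  define u :: "real^'m" where "u = axis i 1"
  define v :: "real^'m" where "v = axis j 1"
  have hd: "\<And>y. y \<in> N \<Longrightarrow> h differentiable at y" using smooth_diff[OF N hs] .
  have hid: "\<And>y. y \<in> N \<Longrightarrow> pd h i differentiable at y" using smooth_diff[OF N smooth_pd[OF hs]] .
  have e1: "\<And>s. x + s *\<^sub>R u + t *\<^sub>R v = (x + t *\<^sub>R v) + s *\<^sub>R u" by (simp add: algebra_simps)
  have "\<And>s. 0 \<le> s \<Longrightarrow> s \<le> t \<Longrightarrow> ((\<lambda>s. h (x + s *\<^sub>R u + t *\<^sub>R v) - h (x + s *\<^sub>R u)) has_real_derivative
        (pd h i (x + s *\<^sub>R u + t *\<^sub>R v) - pd h i (x + s *\<^sub>R u))) (at s)"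
  proof -
    fix s assume s: "0 \<le> s" "s \<le> t"
    have m1: "x + s *\<^sub>R u + t *\<^sub>R v \<in> N" using inN[OF s] t unfolding u_def v_def by auto
    have m2: "x + s *\<^sub>R u \<in> N" using inN[OF s, of 0] t unfolding u_def v_def by auto
    have D1: "((\<lambda>s. h ((x + t *\<^sub>R v) + s *\<^sub>R u)) has_real_derivative frechet_derivative h (at ((x + t *\<^sub>R v) + s *\<^sub>R u)) u) (at s)"
      by (rule line_deriv) (use hd m1 e1 in auto)
    have D2: "((\<lambda>s. h (x + s *\<^sub>R u)) has_real_derivative frechet_derivative h (at (x + s *\<^sub>R u)) u) (at s)"
      by (rule line_deriv) (use hd m2 in auto)
    show "?thesis s" using DERIV_diff[OF D1 D2] by (simp only: e1) (simp add: pd_def u_def)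
  qed
  from MVT2[OF t this] obtain s0 where s0: "0 < s0" "s0 < t"
    "h (x + t *\<^sub>R u + t *\<^sub>R v) - h (x + t *\<^sub>R u) - (h (x + 0 *\<^sub>R u + t *\<^sub>R v) - h (x + 0 *\<^sub>R u))
      = (t - 0) * (pd h i (x + s0 *\<^sub>R u + t *\<^sub>R v) - pd h i (x + s0 *\<^sub>R u))" by auto
  have "\<And>\<sigma>. 0 \<le> \<sigma> \<Longrightarrow> \<sigma> \<le> t \<Longrightarrow> ((\<lambda>\<sigma>. pd h i (x + s0 *\<^sub>R u + \<sigma> *\<^sub>R v)) has_real_derivative
        pd (pd h i) j (x + s0 *\<^sub>R u + \<sigma> *\<^sub>R v)) (at \<sigma>)"
  proof -
    fix \<sigma> :: real assume s: "0 \<le> \<sigma>" "\<sigma> \<le> t"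
    have m1: "x + s0 *\<^sub>R u + \<sigma> *\<^sub>R v \<in> N" using inN[of s0 \<sigma>] s s0 unfolding u_def v_def by auto
    show "?thesis \<sigma>" unfolding pd_def[of "pd h i"] v_def[symmetric]
      by (rule line_deriv) (use hid m1 in auto)
  qed
  from MVT2[OF t this] obtain \<sigma>0 where s1: "0 < \<sigma>0" "\<sigma>0 < t"
    "pd h i (x + s0 *\<^sub>R u + t *\<^sub>R v) - pd h i (x + s0 *\<^sub>R u + 0 *\<^sub>R v)
      = (t - 0) * pd (pd h i) j (x + s0 *\<^sub>R u + \<sigma>0 *\<^sub>R v)" by auto
  have E: "h (x + t *\<^sub>R u + t *\<^sub>R v) - h (x + t *\<^sub>R u) - h (x + t *\<^sub>R v) + h x
     = t * (pd h i (x + s0 *\<^sub>R u + t *\<^sub>R v) - pd h i (x + s0 *\<^sub>R u))"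
    using s0(3) by simp
  also have "\<dots> = t * t * pd (pd h i) j (x + s0 *\<^sub>R u + \<sigma>0 *\<^sub>R v)"
    using s1(3) by simp
  finally show ?thesis
    apply -
    apply (rule exI[of _ s0], rule exI[of _ \<sigma>0])
    using s0 s1 unfolding u_def[symmetric] v_def[symmetric] by simp
qed

lemma schwarz:
  fixes h :: "real^'m \<Rightarrow> real"
  assumes N: "open N" and hs: "smooth_on N h" and x: "x \<in> N"
  shows "pd (pd h i) j x = pd (pd h j) i x"
proof (rule ccontr)
  define A where "A = pd (pd h i) j x"
  define B where "B = pd (pd h j) i x"
  assume ne: "\<not> ?thesis"
  define e where "e = \<bar>A - B\<bar> / 2"
  have e: "e > 0" using ne unfolding e_def A_def B_def by auto
  obtain r where r: "r > 0" "ball x r \<subseteq> N" using N x open_contains_ball by blast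
  have cA: "continuous_on N (pd (pd h i) j)" using smooth_cont smooth_pd hs by blast
  have cB: "continuous_on N (pd (pd h j) i)" using smooth_cont smooth_pd hs by blast
  obtain d1 where d1: "d1 > 0" "\<And>y. y \<in> N \<Longrightarrow> dist y x < d1 \<Longrightarrow> dist (pd (pd h i) j y) A < e"
    using cA x e unfolding continuous_on_iff A_def by blast
  obtain d2 where d2: "d2 > 0" "\<And>y. y \<in> N \<Longrightarrow> dist y x < d2 \<Longrightarrow> dist (pd (pd h j) i y) B < e"
    using cB x e unfolding continuous_on_iff B_def by blast
  define t where "t = min r (min d1 d2) / 3"
  have t: "t > 0" using r d1 d2 unfolding t_def by auto
  have near: "\<And>s \<sigma> a b. 0 \<le> s \<Longrightarrow> s \<le> t \<Longrightarrow> 0 \<le> \<sigma> \<Longrightarrow> \<sigma> \<le> t \<Longrightarrow>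
      dist (x + s *\<^sub>R axis a 1 + \<sigma> *\<^sub>R axis b 1) x < min r (min d1 d2)"
  proof -
    fix s \<sigma> :: real and a b :: 'm assume s: "0 \<le> s" "s \<le> t" "0 \<le> \<sigma>" "\<sigma> \<le> t"
    have "dist (x + s *\<^sub>R axis a 1 + \<sigma> *\<^sub>R axis b 1) x = norm (s *\<^sub>R axis a (1::real) + \<sigma> *\<^sub>R axis b 1)"
      by (simp add: dist_norm)
    also have "\<dots> \<le> norm (s *\<^sub>R axis a (1::real)) + norm (\<sigma> *\<^sub>R axis b (1::real))" by (rule norm_triangle_ineq)
    also have "\<dots> = s + \<sigma>" using s by simp
    also have "\<dots> < min r (min d1 d2)" using s t unfolding t_def by auto
    finally show "?thesis s \<sigma> a b" .
  qed
  have inN: "\<And>s \<sigma> a b. 0 \<le> s \<Longrightarrow> s \<le> t \<Longrightarrow> 0 \<le> \<sigma> \<Longrightarrow> \<sigma> \<le> t \<Longrightarrow>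
      x + s *\<^sub>R axis a 1 + \<sigma> *\<^sub>R axis b 1 \<in> N"
  proof -
    fix s \<sigma> :: real and a b :: 'm assume s: "0 \<le> s" "s \<le> t" "0 \<le> \<sigma>" "\<sigma> \<le> t"
    have "dist x (x + s *\<^sub>R axis a 1 + \<sigma> *\<^sub>R axis b 1) < r"
      using near[OF s, of a b] by (simp add: dist_commute)
    then show "?thesis s \<sigma> a b" using r(2) by auto
  qed
  define \<Delta> where "\<Delta> = h (x + t *\<^sub>R axis i 1 + t *\<^sub>R axis j 1) - h (x + t *\<^sub>R axis i 1) - h (x + t *\<^sub>R axis j 1) + h x"
  obtain s \<sigma> where 1: "0 \<le> s" "s \<le> t" "0 \<le> \<sigma>" "\<sigma> \<le> t" "\<Delta> = t * t * pd (pd h i) j (x + s *\<^sub>R axis i 1 + \<sigma> *\<^sub>R axis j 1)"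
    using sw_aux[OF N hs t inN] unfolding \<Delta>_def by blast
  obtain s' \<sigma>' where 2: "0 \<le> s'" "s' \<le> t" "0 \<le> \<sigma>'" "\<sigma>' \<le> t" "\<Delta> = t * t * pd (pd h j) i (x + s' *\<^sub>R axis j 1 + \<sigma>' *\<^sub>R axis i 1)"
  proof -
    have e: "x + t *\<^sub>R axis j 1 + t *\<^sub>R axis i 1 = x + t *\<^sub>R axis i 1 + t *\<^sub>R axis j 1"
      by (simp add: add_ac)
    obtain s' \<sigma>' where "0 \<le> s'" "s' \<le> t" "0 \<le> \<sigma>'" "\<sigma>' \<le> t" "h (x + t *\<^sub>R axis j 1 + t *\<^sub>R axis i 1) - h (x + t *\<^sub>R axis j 1) - h (x + t *\<^sub>R axis i 1) + h x = t * t * pd (pd h j) i (x + s' *\<^sub>R axis j 1 + \<sigma>' *\<^sub>R axis i 1)"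
      using sw_aux[OF N hs t inN, of j i] by blast
    note h = this
    have "\<Delta> = t * t * pd (pd h j) i (x + s' *\<^sub>R axis j 1 + \<sigma>' *\<^sub>R axis i 1)"
      using h(5) unfolding \<Delta>_def e by linarith
    then show ?thesis using that h(1-4) by blast
  qed
  have tt: "t * t \<noteq> 0" using t by simp
  have q1: "\<Delta> / (t*t) = pd (pd h i) j (x + s *\<^sub>R axis i 1 + \<sigma> *\<^sub>R axis j 1)"
    using 1(5) tt by simp
  have q2: "\<Delta> / (t*t) = pd (pd h j) i (x + s' *\<^sub>R axis j 1 + \<sigma>' *\<^sub>R axis i 1)"
    using 2(5) tt by simp
  have "dist (\<Delta> / (t*t)) A < e" unfolding q1
    apply (rule d1(2))
     apply (rule inN; fact)
    using near[of s \<sigma> i j, OF 1(1-4)] by simp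
  moreover have "dist (\<Delta> / (t*t)) B < e" unfolding q2
    apply (rule d2(2))
     apply (rule inN; fact)
    using near[of s' \<sigma>' j i, OF 2(1-4)] by simp
  ultimately have "dist A (\<Delta> / (t*t)) + dist B (\<Delta> / (t*t)) < 2 * e" by (simp add: dist_commute)
  then have "dist A B < 2 * e" by (rule dist_triangle_lt)
  then show False unfolding e_def dist_real_def by auto
qed



lemma G_inv:
  fixes Hm :: "real^'n^'n"
  assumes sym: "transpose Hm = Hm"
  shows "invertible (mat 1 - (2*c) *\<^sub>R Hm + (2*c^2) *\<^sub>R (Hm ** Hm))"
proof -
  define Gm where "Gm = mat 1 - (2*c) *\<^sub>R Hm + (2*c^2) *\<^sub>R (Hm ** Hm)"
  have sy: "\<And>u z. u \<bullet> (Hm *v z) = (Hm *v u) \<bullet> z"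
    by (metis dot_lmul_matrix sym transpose_matrix_vector)
  have ker: "\<forall>v. Gm *v v = 0 \<longrightarrow> v = 0"
  proof (intro allI impI)
    fix v :: "real^'n" assume Gv: "Gm *v v = 0"
    define w where "w = Hm *v v"
    have e1: "Gm *v v = v - (2*c) *\<^sub>R w + (2*c^2) *\<^sub>R (Hm *v w)"
      unfolding Gm_def w_def
      by (simp add: algebra_simps scaleR_matrix_vector_assoc[symmetric] matrix_vector_mul_assoc[symmetric])
    have "0 = v \<bullet> (Gm *v v)" using Gv by simp
    also have "\<dots> = v \<bullet> v - 2*c * (v \<bullet> w) + 2*c^2 * (w \<bullet> w)"
      unfolding e1 by (simp add: inner_diff_right inner_add_right sy w_def)
    also have "\<dots> = (v - c *\<^sub>R w) \<bullet> (v - c *\<^sub>R w) + c^2 * (w \<bullet> w)"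
      by (simp add: inner_diff_left inner_diff_right inner_commute power2_eq_square algebra_simps)
    finally have z: "(v - c *\<^sub>R w) \<bullet> (v - c *\<^sub>R w) + c^2 * (w \<bullet> w) = 0" by simp
    have n1: "(v - c *\<^sub>R w) \<bullet> (v - c *\<^sub>R w) \<ge> 0" by simp
    have n2: "c^2 * (w \<bullet> w) \<ge> 0" by simp
    have a1: "v - c *\<^sub>R w = 0" using z n1 n2 by (metis add_nonneg_eq_0_iff inner_eq_zero_iff)
    have "c^2 * (w \<bullet> w) = 0" using z n1 n2 by linarith
    then have "c *\<^sub>R w = 0" by auto
    then show "v = 0" using a1 by simp
  qed
  then obtain B where "B ** Gm = mat 1" using matrix_left_invertible_ker by blast
  then show ?thesis unfolding Gm_def[symmetric] using invertible_left_inverse by blast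
qed


lemma swap1: fixes w :: "_ \<Rightarrow> real" shows "(\<Sum>e\<in>A. w e * (\<Sum>k\<in>B. f k * g k e)) = (\<Sum>k\<in>B. f k * (\<Sum>e\<in>A. g k e * w e))"
  by (simp add: sum_distrib_left mult_ac sum.swap[of _ A B])

lemma swap2: fixes v :: "_ \<Rightarrow> real" shows "(\<Sum>c\<in>A. (k * (\<Sum>e\<in>B. M c e * P e)) * v c) = k * (\<Sum>e\<in>B. (\<Sum>c\<in>A. M c e * v c) * P e)"
  by (simp add: sum_distrib_left sum_distrib_right mult_ac sum.swap[of _ A B])


lemma swap3: fixes v :: "_ \<Rightarrow> real" shows "(\<Sum>b\<in>A. v b * (\<Sum>k\<in>B. h b k * g k)) = (\<Sum>k\<in>B. (\<Sum>b\<in>A. h b k * v b) * g k)"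
  by (simp add: sum_distrib_left sum_distrib_right mult_ac sum.swap[of _ A B])


lemma swap4: fixes w :: "_ \<Rightarrow> real" shows "(\<Sum>e\<in>A. (\<Sum>k\<in>B. f k * g k e) * w e) = (\<Sum>k\<in>B. f k * (\<Sum>e\<in>A. g k e * w e))"
  using swap1[of w f g B A] by (simp add: mult.commute)


lemma swap5: fixes w :: "_ \<Rightarrow> real" shows "(\<Sum>e\<in>A. w e * (\<Sum>k\<in>B. g e k * f k)) = (\<Sum>k\<in>B. (\<Sum>e\<in>A. w e * g e k) * f k)"
  by (simp add: sum_distrib_left sum_distrib_right mult_ac sum.swap[of _ A B])

lemma swap6: fixes w :: "_ \<Rightarrow> real" shows "(\<Sum>e\<in>A. w e * (\<Sum>k\<in>B. f k * g e k)) = (\<Sum>k\<in>B. f k * (\<Sum>e\<in>A. w e * g e k))"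
  by (simp add: sum_distrib_left sum_distrib_right mult_ac sum.swap[of _ A B])



lemma pointwise:
  fixes d :: "real^'n \<Rightarrow> real"
  assumes N: "open N" and ds: "smooth_on N d" and eik: "\<forall>x\<in>N. norm (grad d x) = 1" and x: "x \<in> N"
  shows "hessG (Gmet d) d x a b = d x * (\<Sum>r\<in>UNIV. pd (pd d r) a x * pd (pd d r) b x)"
proof -
  define hh where "hh p q = pd (pd d q) p" for p q
  have Dd: "\<And>y. y \<in> N \<Longrightarrow> d differentiable at y" using smooth_diff[OF N ds] .
  have D1: "\<And>y e. y \<in> N \<Longrightarrow> pd d e differentiable at y" using smooth_diff[OF N smooth_pd[OF ds]] .
  have D2: "\<And>y p q. y \<in> N \<Longrightarrow> hh p q differentiable at y"
    unfolding hh_def using smooth_diff[OF N smooth_pd[OF smooth_pd[OF ds]]] .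
  have D2': "\<And>y p q. y \<in> N \<Longrightarrow> (\<lambda>y. hh p q y) differentiable at y" using D2 by simp
  have D1': "\<And>y e. y \<in> N \<Longrightarrow> (\<lambda>y. pd d e y) differentiable at y" using D1 by simp
  have Fsym: "\<And>y p q. y \<in> N \<Longrightarrow> hh p q y = hh q p y"
    unfolding hh_def using schwarz[OF N ds] by blast
  have Feik: "\<And>y. y \<in> N \<Longrightarrow> (\<Sum>e\<in>UNIV. pd d e y * pd d e y) = 1"
  proof -
    fix y assume "y \<in> N"
    then have "grad d y \<bullet> grad d y = 1" using eik by (simp add: norm_eq_1)
    then show "?thesis y" by (simp add: inner_vec_def grad_def)
  qed
  have FHnu: "\<And>y p. y \<in> N \<Longrightarrow> (\<Sum>e\<in>UNIV. hh p e y * pd d e y) = 0"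
  proof -
    fix y p assume y: "y \<in> N"
    have "pd (\<lambda>z. \<Sum>e\<in>UNIV. pd d e z * pd d e z) p y = pd (\<lambda>z. 1) p y"
      by (rule pd_cong[OF N y]) (simp add: Feik)
    also have "\<dots> = 0" by (rule pd_const)
    finally have "(\<Sum>e\<in>UNIV. pd (\<lambda>z. pd d e z * pd d e z) p y) = 0"
      using pd_sum[of UNIV "\<lambda>e z. pd d e z * pd d e z" y p] D1[OF y] by simp
    then have "(\<Sum>e\<in>UNIV. 2 * (hh p e y * pd d e y)) = 0"
      using pd_mult[OF D1'[OF y] D1'[OF y]] by (simp add: hh_def mult.commute)
    then show "?thesis y p" by (simp add: sum_distrib_left[symmetric])
  qed
  define \<nu> where "\<nu> e = pd d e x" for e
  define H where "H p q = hh p q x" for p q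
  define D where "D c p q = pd (hh p q) c x" for c p q
  define Q where "Q p q = (\<Sum>e\<in>UNIV. H p e * H q e)" for p q
  define S where "S p q = (\<Sum>k\<in>UNIV. H p k * H k q)" for p q
  define dx where "dx = d x"
  have Hsym: "\<And>p q. H p q = H q p" unfolding H_def using Fsym[OF x] .
  have Hnu: "\<And>p. (\<Sum>e\<in>UNIV. H p e * \<nu> e) = 0" unfolding H_def \<nu>_def using FHnu[OF x] .
  have nu2: "(\<Sum>e\<in>UNIV. \<nu> e * \<nu> e) = 1" unfolding \<nu>_def using Feik[OF x] .
  have FD3: "\<And>k a. (\<Sum>e\<in>UNIV. D a k e * \<nu> e) = - Q k a"
  proof -
    fix k a
    have "pd (\<lambda>z. \<Sum>e\<in>UNIV. hh k e z * pd d e z) a x = pd (\<lambda>z. 0) a x"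
      by (rule pd_cong[OF N x]) (simp add: FHnu)
    also have "\<dots> = 0" by (rule pd_const)
    finally have "(\<Sum>e\<in>UNIV. pd (\<lambda>z. hh k e z * pd d e z) a x) = 0"
      using pd_sum[of UNIV "\<lambda>e z. hh k e z * pd d e z" x a] D1'[OF x] D2'[OF x] by simp
    then have "(\<Sum>e\<in>UNIV. D a k e * \<nu> e + H k e * H a e) = 0"
      using pd_mult[OF D2'[OF x] D1'[OF x]] by (simp add: D_def H_def \<nu>_def hh_def)
    then show "?thesis k a" by (simp add: sum.distrib Q_def)
  qed
  have Fthird: "\<And>a b e. D e a b = D b a e"
  proof -
    fix a b e
    have "D e a b = pd (hh b a) e x" unfolding D_def by (rule pd_cong[OF N x]) (simp add: Fsym)
    also have "\<dots> = pd (pd (pd d a) e) b x" unfolding hh_def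
      by (rule schwarz[OF N smooth_pd[OF ds] x])
    also have "\<dots> = D b a e" unfolding D_def hh_def[symmetric]
      by (rule pd_cong[OF N x]) (simp add: Fsym)
    finally show "?thesis a b e" .
  qed
  have FR: "\<And>p q. (\<Sum>e\<in>UNIV. \<nu> e * D e p q) = - Q p q"
    using FD3 Fthird by (simp add: mult.commute)
  have Gf: "\<And>y b e. Gmet d y $ b $ e = (if b = e then 1 else 0) - 2 * d y * hh b e y + 2 * (d y * d y) * (\<Sum>k\<in>UNIV. hh b k y * hh k e y)"
    by (simp add: Gmet_def hess_def hh_def matrix_matrix_mult_def mat_def power2_eq_square)
  define E where "E a b e = pd (\<lambda>y. Gmet d y $ b $ e) a x" for a b e
  have GE: "\<And>a b e. E a b e = -2 * (\<nu> a * H b e + dx * D a b e) + 4 * dx * \<nu> a * S b e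
       + 2 * (dx*dx) * (\<Sum>k\<in>UNIV. D a b k * H k e + H b k * D a k e)"
  proof -
    fix a b e
    have "E a b e = pd (\<lambda>y. (if b = e then 1 else 0) - 2 * d y * hh b e y + 2 * (d y * d y) * (\<Sum>k\<in>UNIV. hh b k y * hh k e y)) a x"
      unfolding E_def Gf ..
    also have "\<dots> = - ((2 * \<nu> a) * H b e + 2 * dx * D a b e) + ((2 * (\<nu> a * dx + dx * \<nu> a)) * S b e
        + 2 * (dx * dx) * (\<Sum>k\<in>UNIV. D a b k * H k e + H b k * D a k e))"
      using Dd[OF x] D2'[OF x] D2[OF x]
      by (simp add: pd_add pd_diff pd_mult pd_const pd_sum \<nu>_def H_def D_def dx_def S_def)
    finally show "?thesis a b e" by (simp add: algebra_simps)
  qed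
  define Hm where "Hm = hess d x"
  define Gm where "Gm = Gmet d x"
  define Mi where "Mi = matrix_inv Gm"
  have HmT: "transpose Hm = Hm"
    using Hsym unfolding Hm_def H_def hh_def by (simp add: vec_eq_iff transpose_def hess_def)
  have "invertible Gm" unfolding Gm_def Gmet_def Hm_def[symmetric] dx_def[symmetric]
    by (rule G_inv[OF HmT])
  then have GMi: "Gm ** Mi = mat 1" unfolding Mi_def matrix_inv_def invertible_def
    by (metis (mono_tags, lifting) someI_ex)
  define nv :: "real^'n" where "nv = (\<chi> e. \<nu> e)"
  have Gx: "\<And>b e. Gm $ b $ e = (if b = e then 1 else 0) - 2 * dx * H b e + 2 * (dx * dx) * S b e"
    unfolding Gm_def Gf H_def S_def dx_def ..
  have nuH: "\<And>e. (\<Sum>b\<in>UNIV. \<nu> b * H b e) = 0"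
    using Hnu by (simp add: Hsym mult.commute)
  have Hnu': "\<And>k. (\<Sum>b\<in>UNIV. H b k * \<nu> b) = 0" using Hnu by (simp add: Hsym)
  have nuS: "\<And>e. (\<Sum>b\<in>UNIV. \<nu> b * S b e) = 0"
    unfolding S_def swap3 Hnu' by simp
  have Snu: "\<And>b. (\<Sum>e\<in>UNIV. S b e * \<nu> e) = 0"
    unfolding S_def swap4 Hnu by simp
  have nvG0: "\<And>e. (\<Sum>b\<in>UNIV. \<nu> b * Gm$b$e) = \<nu> e"
  proof -
    fix e
    have "(\<Sum>b\<in>UNIV. \<nu> b * Gm$b$e) = (\<Sum>b\<in>UNIV. \<nu> b * (if b = e then 1 else 0) - 2*dx*(\<nu> b * H b e) + 2*(dx*dx)*(\<nu> b * S b e))"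
      by (rule sum.cong) (simp_all add: Gx algebra_simps)
    also have "\<dots> = (\<Sum>b\<in>UNIV. \<nu> b * (if b = e then 1 else 0)) - 2*dx*(\<Sum>b\<in>UNIV. \<nu> b * H b e) + 2*(dx*dx)*(\<Sum>b\<in>UNIV. \<nu> b * S b e)"
      by (simp add: sum.distrib sum_subtractf sum_distrib_left)
    also have "(\<Sum>b\<in>UNIV. \<nu> b * (if b = e then 1 else 0)) = (\<Sum>b\<in>UNIV. if b = e then \<nu> b else 0)"
      by (rule sum.cong) auto
    also have "\<dots> = \<nu> e" by simp
    finally show "?thesis e" by (simp add: nuH nuS)
  qed
  have nvG: "nv v* Gm = nv"
    by (simp add: vec_eq_iff vector_matrix_mult_def nv_def nvG0)
  have MiNu: "\<And>e. (\<Sum>c\<in>UNIV. Mi $ c $ e * \<nu> c) = \<nu> e"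
  proof -
    fix e
    have "nv v* Mi = nv" by (metis GMi nvG vector_matrix_mul_assoc vector_matrix_mul_rid)
    then have "(nv v* Mi) $ e = \<nu> e" by (simp add: nv_def)
    then show "?thesis e" by (simp add: vector_matrix_mult_def nv_def mult.commute)
  qed
  have chr: "(\<Sum>c\<in>UNIV. christoffel (Gmet d) x c a b * pd d c x) = 1/2 * (\<Sum>e\<in>UNIV. \<nu> e * (E a b e + E b a e - E e a b))"
    unfolding christoffel_def Gm_def[symmetric] Mi_def[symmetric] E_def[symmetric] \<nu>_def[symmetric]
    unfolding swap2 MiNu ..
  have C1: "\<And>a b. (\<Sum>e\<in>UNIV. \<nu> e * E a b e) = 2*dx*Q b a - 2*(dx*dx) * (\<Sum>k\<in>UNIV. H b k * Q k a)"
  proof -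
    fix a b
    have "(\<Sum>e\<in>UNIV. \<nu> e * E a b e) = -2 * \<nu> a * (\<Sum>e\<in>UNIV. H b e * \<nu> e) - 2*dx*(\<Sum>e\<in>UNIV. D a b e * \<nu> e)
      + 4*dx*\<nu> a*(\<Sum>e\<in>UNIV. \<nu> e * S b e) + 2*(dx*dx)*((\<Sum>e\<in>UNIV. \<nu> e * (\<Sum>k\<in>UNIV. D a b k * H k e))
      + (\<Sum>e\<in>UNIV. \<nu> e * (\<Sum>k\<in>UNIV. H b k * D a k e)))"
      by (simp add: GE algebra_simps sum.distrib sum_distrib_left sum_subtractf sum_negf)
    also have "\<dots> = 2*dx*Q b a - 2*(dx*dx) * (\<Sum>k\<in>UNIV. H b k * Q k a)"
      unfolding swap1 Hnu FD3 nuS[unfolded mult.commute[of "\<nu> _"]]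
      by (simp add: mult.commute[of "\<nu> _"] nuS Snu sum_negf)
    finally show "?thesis a b" .
  qed
  have C3: "(\<Sum>e\<in>UNIV. \<nu> e * E e a b) = -2 * H a b + 2*dx*Q a b + 4*dx*S a b
      - 2*(dx*dx) * ((\<Sum>k\<in>UNIV. Q a k * H k b) + (\<Sum>k\<in>UNIV. H a k * Q k b))"
  proof -
    have "(\<Sum>e\<in>UNIV. \<nu> e * E e a b) = -2 * (\<Sum>e\<in>UNIV. \<nu> e * \<nu> e) * H a b - 2*dx*(\<Sum>e\<in>UNIV. \<nu> e * D e a b)
      + 4*dx*(\<Sum>e\<in>UNIV. \<nu> e * \<nu> e)*S a b + 2*(dx*dx)*((\<Sum>e\<in>UNIV. \<nu> e * (\<Sum>k\<in>UNIV. D e a k * H k b))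
      + (\<Sum>e\<in>UNIV. \<nu> e * (\<Sum>k\<in>UNIV. H a k * D e k b)))"
      by (simp add: GE algebra_simps sum.distrib sum_distrib_left sum_subtractf sum_negf)
    also have "\<dots> = -2 * H a b + 2*dx*Q a b + 4*dx*S a b
      - 2*(dx*dx) * ((\<Sum>k\<in>UNIV. Q a k * H k b) + (\<Sum>k\<in>UNIV. H a k * Q k b))"
      unfolding swap5 swap6 FR nu2 by (simp add: sum_negf algebra_simps)
    finally show ?thesis .
  qed
  have Qsym: "\<And>p q. Q p q = Q q p" unfolding Q_def by (simp add: mult.commute)
  have SQ: "S a b = Q a b" unfolding S_def Q_def by (simp add: Hsym)
  have W: "(\<Sum>k\<in>UNIV. H b k * Q k a) = (\<Sum>k\<in>UNIV. Q a k * H k b)"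
    by (rule sum.cong) (simp_all add: Hsym Qsym mult.commute)
  have hG: "hessG (Gmet d) d x a b = H a b - (\<Sum>c\<in>UNIV. christoffel (Gmet d) x c a b * pd d c x)"
    unfolding hessG_def H_def hh_def by (simp add: mult.commute)
  have sp: "(\<Sum>e\<in>UNIV. \<nu> e * (E a b e + E b a e - E e a b)) = (\<Sum>e\<in>UNIV. \<nu> e * E a b e) + (\<Sum>e\<in>UNIV. \<nu> e * E b a e) - (\<Sum>e\<in>UNIV. \<nu> e * E e a b)"
    by (simp add: algebra_simps sum.distrib sum_subtractf)
  have rhs: "(\<Sum>r\<in>UNIV. pd (pd d r) a x * pd (pd d r) b x) = Q a b"
    unfolding Q_def H_def hh_def ..
  show ?thesis unfolding rhs hG chr sp C1 C3 dx_def[symmetric] SQ W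
    by (simp add: Qsym[of b a] algebra_simps)
qed


theorem mainTheorem8:
  fixes M :: "(real^'n) set" and T :: real
    and U :: "(real^'k) set" and g :: "real^'k \<Rightarrow> real^'k^'k"
    and f :: "real^'k \<Rightarrow> real^'n"
  defines "d \<equiv> sdist M"
  defines "N \<equiv> {x. \<bar>sdist M x\<bar> < T}"
  assumes dim: "CARD('n) \<ge> 2"
    and hyp: "smooth_closed_hypersurface M" and orient: "orientable_hypersurface M"
    and T: "T > 0" and N_open: "open N"
    and d_smooth: "smooth_on N d"
    and d_eik: "\<forall>x\<in>N. norm (grad d x) = 1"
    and decomp: "\<forall>x\<in>N. \<exists>!a. a \<in> M \<and> x = a + d x *\<^sub>R grad d x"
    and U_open: "open U"
    and g_smooth: "\<forall>i j. smooth_on U (\<lambda>y. g y $ i $ j)"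
    and g_sym: "\<forall>y\<in>U. transpose (g y) = g y"
    and g_pos: "\<forall>y\<in>U. \<forall>v. v \<noteq> 0 \<longrightarrow> v \<bullet> (g y *v v) > 0"
    and f_diff: "f differentiable_on U"
    and f_N: "f ` U \<subseteq> N"
  shows "\<forall>y\<in>U.
    (\<Sum>a\<in>UNIV. \<Sum>b\<in>UNIV.
        (\<Sum>i\<in>UNIV. \<Sum>j\<in>UNIV. matrix_inv (g y) $ i $ j * pd (\<lambda>z. f z $ a) i y * pd (\<lambda>z. f z $ b) j y)
        * hessG (Gmet d) d (f y) a b)
  = (\<Sum>a\<in>UNIV. \<Sum>b\<in>UNIV.
        (\<Sum>i\<in>UNIV. \<Sum>j\<in>UNIV. matrix_inv (g y) $ i $ j * pd (\<lambda>z. f z $ a) i y * pd (\<lambda>z. f z $ b) j y)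
        * (d (f y) * (\<Sum>r\<in>UNIV. pd (pd d r) a (f y) * pd (pd d r) b (f y))))"
  using f_N by (auto simp: image_subset_iff pointwise[OF N_open d_smooth d_eik])

end
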